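(* Let $n\ge0$, and let $e=(x,y)$ be an arc of $A(n)$. For each arc $(x,x')$ of $A(n)$ different from $e$, there exists exactly one arc $(y,y')$ of $A(n)$ such that $(x',y')$ is an arc of $A(n)$.
   Context: A hyperbinary expansion of a nonnegative integer $n$ is a word $x_0\cdots x_k$ over $\{0,1,2\}$ with $x_0\ne0$ and $\sum_i x_i2^{k-i}=n$; the empty word is the unique expansion of $0$. $\mathcal H(n)$ is the set of such expansions. $A(n)$ is the directed graph on $\mathcal H(n)$ with the following labeled arcs, for arbitrary words $\mathbf x,\mathbf y$ whenever both endpoints lie in $\mathcal H(n)$: \begin{itemize} \item an arc labeled $\to$ from $\mathbf x02\mathbf y$ to $\mathbf x10\mathbf y$ and from $2\mathbf y$ to $10\mathbf y$; \item an arc labeled $\twoheadrightarrow$ from $\mathbf x12\mathbf y$ to $\mathbf x20\mathbf y$. \end{itemize} *)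

theory Defs
  imports Main
begin

definition hval :: "nat list \<Rightarrow> nat" where
  "hval w = (\<Sum>i<length w. w ! i * 2 ^ (length w - 1 - i))"

definition H :: "nat \<Rightarrow> nat list set" where
  "H n = {w. set w \<subseteq> {0,1,2} \<and> (w \<noteq> [] \<longrightarrow> hd w \<noteq> 0) \<and> hval w = n}"

definition arc1 :: "nat \<Rightarrow> nat list \<Rightarrow> nat list \<Rightarrow> bool" where
  "arc1 n v w \<longleftrightarrow> v \<in> H n \<and> w \<in> H n \<and>
     ((\<exists>x y. v = x @ [0,2] @ y \<and> w = x @ [1,0] @ y) \<or>
      (\<exists>y. v = 2 # y \<and> w = [1,0] @ y))"

definition arc2 :: "nat \<Rightarrow> nat list \<Rightarrow> nat list \<Rightarrow> bool" where
  "arc2 n v w \<longleftrightarrow> v \<in> H n \<and> w \<in> H n \<and>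
     (\<exists>x y. v = x @ [1,2] @ y \<and> w = x @ [2,0] @ y)"

definition arcA :: "nat \<Rightarrow> nat list \<Rightarrow> nat list \<Rightarrow> bool" where
  "arcA n v w \<longleftrightarrow> arc1 n v w \<or> arc2 n v w"

end

theory Submission
  imports Defs
begin

definition D :: "nat list \<Rightarrow> nat \<Rightarrow> nat" where
  "D w j = (if j < length w then rev w ! j else 0)"

definition step :: "(nat \<Rightarrow> nat) \<Rightarrow> nat \<Rightarrow> nat \<Rightarrow> nat" where
  "step f j = f(j := 0, Suc j := Suc (f (Suc j)))"

lemma hval_Nil[simp]: "hval [] = 0" by (simp add: hval_def)

lemma hval_Cons[simp]: "hval (a # w) = a * 2 ^ length w + hval w"
  unfolding hval_def length_Cons sum.lessThan_Suc_shift by simp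

lemma hval_append[simp]: "hval (xs @ ys) = hval xs * 2 ^ length ys + hval ys"
  by (induction xs) (auto simp: algebra_simps power_add)

lemma D_app: "D (x @ a # b # y) = (\<lambda>k. if k < length y then rev y ! k else if k = length y then b
   else if k = Suc (length y) then a else D x (k - length y - 2))"
  by (rule ext) (auto simp: D_def nth_append)

lemma D_Cons: "D (b # y) = (\<lambda>k. if k < length y then rev y ! k else if k = length y then b
   else 0)"
  by (rule ext) (auto simp: D_def nth_append)

lemma D_Cons2: "D (a # b # y) = (\<lambda>k. if k < length y then rev y ! k else if k = length y then b
   else if k = Suc (length y) then a else 0)"
  by (rule ext) (auto simp: D_def nth_append)

lemma L1:
  assumes "arcA n v w"
  shows "v \<in> H n \<and> w \<in> H n \<and> (\<exists>j. D v j = 2 \<and> D v (Suc j) \<le> 1 \<and> D w = step (D v) j)"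
  using assms unfolding arcA_def arc1_def arc2_def
proof (elim disjE conjE exE)
  fix x y assume "v \<in> H n" "w \<in> H n" "v = x @ [0, 2] @ y" "w = x @ [1, 0] @ y"
  then show ?thesis
    by (intro conjI exI[of _ "length y"]) (auto simp: D_app step_def fun_eq_iff)
next
  fix y assume "v \<in> H n" "w \<in> H n" "v = 2 # y" "w = [1, 0] @ y"
  then show ?thesis
    by (intro conjI exI[of _ "length y"]) (auto simp: D_Cons D_Cons2 step_def fun_eq_iff nth_append)
next
  fix x y assume "v \<in> H n" "w \<in> H n" "v = x @ [1, 2] @ y" "w = x @ [2, 0] @ y"
  then show ?thesis
    by (intro conjI exI[of _ "length y"]) (auto simp: D_app step_def fun_eq_iff)
qed

lemma L3:
  assumes "v \<in> H n" "w \<in> H m" "D v = D w"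
  shows "v = w"
proof -
  have hd: "\<And>u k. u \<in> H k \<Longrightarrow> u \<noteq> [] \<Longrightarrow> D u (length u - 1) \<noteq> 0"
    by (auto simp: H_def D_def rev_nth hd_conv_nth)
  have "\<not> length v < length w"
  proof
    assume l: "length v < length w"
    then have "D w (length w - 1) \<noteq> 0" using hd[OF assms(2)] by (cases w) auto
    moreover have "\<not> (length w - 1 < length v)" using l by linarith
    then have "D v (length w - 1) = 0" unfolding D_def by simp
    ultimately show False using assms(3) by simp
  qed
  moreover have "\<not> length w < length v"
  proof
    assume l: "length w < length v"
    then have "D v (length v - 1) \<noteq> 0" using hd[OF assms(1)] by (cases v) auto
    moreover have "\<not> (length v - 1 < length w)" using l by linarith
    then have "D w (length v - 1) = 0" unfolding D_def by simp
    ultimately show False using assms(3) by simp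
  qed
  ultimately have len: "length v = length w" by simp
  have "rev v = rev w"
  proof (rule nth_equalityI)
    show "length (rev v) = length (rev w)" using len by simp
    fix i assume "i < length (rev v)"
    then show "rev v ! i = rev w ! i" using fun_cong[OF assms(3), of i] len by (simp add: D_def)
  qed
  then show ?thesis by simp
qed

lemma L2:
  assumes v: "v \<in> H n" and d: "D v j = 2" and d1: "D v (Suc j) \<le> 1"
  shows "\<exists>w. arcA n v w \<and> D w = step (D v) j"
proof -
  have jl: "j < length v" using d by (auto simp: D_def split: if_splits)
  define k where "k = length v - Suc j"
  define y where "y = drop (Suc k) v"
  have ly: "length y = j" using jl by (simp add: y_def k_def)
  have vk: "v ! k = 2" using d jl by (simp add: D_def rev_nth k_def)
  have vsplit: "v = take k v @ 2 # y" using id_take_nth_drop[of k v] jl vk by (simp add: k_def y_def)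
  have hv: "set v \<subseteq> {0,1,2}" "v \<noteq> [] \<longrightarrow> hd v \<noteq> 0" "hval v = n" using v by (auto simp: H_def)
  show ?thesis
  proof (cases k)
    case 0
    then have v2: "v = 2 # y" using vsplit by simp
    define w where "w = 1 # 0 # y"
    have "w \<in> H n" using hv v2 by (auto simp: w_def H_def)
    moreover have "D w = step (D v) j" using ly v2
      by (auto simp: w_def D_Cons D_Cons2 step_def fun_eq_iff nth_append)
    ultimately show ?thesis using v v2 unfolding arcA_def arc1_def by (auto simp: w_def)
  next
    case (Suc k')
    define x where "x = take k' v"
    define a where "a = v ! k'"
    have "take k v = x @ [a]" using Suc jl by (simp add: x_def a_def k_def take_Suc_conv_app_nth)
    then have vs: "v = x @ a # 2 # y" using vsplit by simp
    have "D v (Suc j) = a" using vs ly by (simp add: D_app)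
    then have a: "a = 0 \<or> a = 1" using d1 by auto
    define w where "w = x @ (a+1) # 0 # y"
    have "hd w \<noteq> 0" using hv vs a by (cases x) (auto simp: w_def)
    then have wH: "w \<in> H n" using hv vs a by (auto simp: w_def H_def)
    have wD: "D w = step (D v) j" using ly vs
      by (auto simp: w_def D_app step_def fun_eq_iff)
    from a show ?thesis
    proof (elim disjE)
      assume "a = 0" then have "arc1 n v w" using wH v vs unfolding arc1_def
        by (intro conjI disjI1 exI[of _ x] exI[of _ y]) (auto simp: w_def)
      then show ?thesis using wD unfolding arcA_def by blast
    next
      assume "a = 1" then have "arc2 n v w" using wH v vs unfolding arc2_def
        by (intro conjI exI[of _ x] exI[of _ y]) (auto simp: w_def)
      then show ?thesis using wD unfolding arcA_def by blast
    qed
  qed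
qed


theorem mainTheorem9:
  fixes n :: nat and x y x' :: "nat list"
  assumes "arcA n x y"
    and "arcA n x x'"
    and "x' \<noteq> y"
  shows "\<exists>!y'. arcA n y y' \<and> arcA n x' y'"
proof -
  obtain A where xH: "x \<in> H n" and yH: "y \<in> H n" and A: "D x A = 2" "D x (Suc A) \<le> 1"
    and Dy: "D y = step (D x) A" using L1[OF assms(1)] by blast
  obtain B where x'H: "x' \<in> H n" and B: "D x B = 2" "D x (Suc B) \<le> 1"
    and Dx': "D x' = step (D x) B" using L1[OF assms(2)] by blast
  have AB: "A \<noteq> B" using Dy Dx' L3[OF yH x'H] assms(3) by auto
  have AB1: "B \<noteq> Suc A" "A \<noteq> Suc B" using A B by auto
  have "D y B = 2" "D y (Suc B) \<le> 1" using Dy AB AB1 B by (auto simp: step_def)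
  then obtain y' where yy': "arcA n y y'" and Dy': "D y' = step (D y) B" using L2[OF yH] by blast
  have "D x' A = 2" "D x' (Suc A) \<le> 1" using Dx' AB AB1 A by (auto simp: step_def)
  then obtain z where x'z: "arcA n x' z" and Dz: "D z = step (D x') A" using L2[OF x'H] by blast
  have "D z = D y'" using Dz Dy' Dy Dx' AB AB1 by (auto simp: step_def fun_eq_iff)
  then have "z = y'" using L3 L1[OF x'z] L1[OF yy'] by blast
  with x'z have x'y': "arcA n x' y'" by simp
  show ?thesis
  proof (rule ex1I[of _ y'])
    show "arcA n y y' \<and> arcA n x' y'" using yy' x'y' by simp
  next
    fix y2 assume h: "arcA n y y2 \<and> arcA n x' y2"
    obtain C where y2H: "y2 \<in> H n" and C: "D y C = 2" and Dy2: "D y2 = step (D y) C"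
      using L1[of n y y2] h by blast
    obtain E where E: "D x' E = 2" and Dy2': "D y2 = step (D x') E"
      using L1[of n x' y2] h by blast
    have "D x' B = 0" using Dx' by (simp add: step_def)
    then have EB: "E \<noteq> B" using E by auto
    have le: "D y2 B \<le> 1" using Dy2' EB \<open>D x' B = 0\<close> by (auto simp: step_def)
    have "C = B"
    proof (rule ccontr)
      assume "C \<noteq> B"
      then have "D y2 B \<ge> 2" using Dy2 \<open>D y B = 2\<close> by (auto simp: step_def)
      with le show False by simp
    qed
    then have "D y2 = D y'" using Dy2 Dy' by simp
    then show "y2 = y'" using L3 y2H L1[OF yy'] by blast
  qed
qed

end
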